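(* Let $\mathcal{S}\subseteq\mathcal{L}$ and let $\mathcal{AF}_{\vdash}=(\vdash,\overline{\cdot},\mathsf{id})$ be contrapositable with $\vdash$ satisfying Cut. Then the grounded extension of $\mathcal{AF}_{\mathsf{con}}(\mathcal{S})$ equals $\mathit{Arg}_{\vdash}\left(\bigcap\mathsf{MCS}(\mathcal{AF}_{\vdash}(\mathcal{S}))\right)$.
   Context: $\mathcal{L}$ is a set of formulas; ${\vdash}\subseteq\wp_{\sf fin}(\mathcal{L})\times\mathcal{L}$ is arbitrary and $\overline{\cdot}:\mathcal{L}\to\wp(\mathcal{L})$. $\mathit{Arg}_{\vdash'}(\mathcal{S})=\{(\Gamma,\gamma):\Gamma\subseteq\mathcal{S}\text{ finite},\Gamma\vdash'\gamma\}$; in $\mathcal{AF}_{\vdash'}(\mathcal{S})$, $(\Gamma,\gamma)$ attacks $(\Gamma',\gamma')$ iff $\gamma\in\overline{\lambda}$ for some $\lambda\in\Gamma'$. The grounded extension is the $\subseteq$-minimal complete extension (complete = conflict-free, defends every member, and contains every argument it defends). $\vdash^{+\phi}$ is the transitive closure of ${\vdash}\cup\{(\emptyset,\phi)\}$; Cut: for every $\phi$ and finite $\Gamma,\Delta$, if $\Gamma\vdash\phi$ and $\Delta\vdash^{+\phi}\gamma$ then $\Gamma\cup\Delta\vdash\gamma$. Contrapositable: for all finite $\Theta$, if $\Theta\vdash\gamma'$ with $\gamma'\in\overline{\gamma}$, then for every $\sigma\in\Theta$, $(\Theta\cup\{\gamma\})\setminus\{\sigma\}\vdash\sigma'$ for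 some $\sigma'\in\overline{\sigma}$. $\Theta\subseteq\mathcal{S}$ is $\mathcal{AF}_{\vdash}(\mathcal{S})$-inconsistent iff there are $\Theta'\subseteq\Theta$ and $\gamma\in\Theta'$ with $\Theta'\setminus\{\gamma\}\vdash\gamma'$ for some $\gamma'\in\overline{\gamma}$, consistent otherwise; $\mathsf{MCS}(\mathcal{AF}_{\vdash}(\mathcal{S}))$ is the set of maximal consistent subsets of $\mathcal{S}$. $\vdash_{\mathsf{con}}=\{(\Gamma,\gamma):\Gamma\vdash\gamma,\ \Gamma\text{ consistent}\}$ and $\mathcal{AF}_{\mathsf{con}}(\mathcal{S})=\mathcal{AF}_{\vdash_{\mathsf{con}}}(\mathcal{S})$. *)

theory Defs
  imports Main
begin

text \<open>Formulas have type 'f. An entailment relation is a predicate ent :: 'f set => 'f => bool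
  (ent G g means G |- g); a contrariness operator is con :: 'f => 'f set.\<close>

type_synonym 'f ent = "'f set \<Rightarrow> 'f \<Rightarrow> bool"
type_synonym 'f arg = "'f set \<times> 'f"

definition Arg :: "'f ent \<Rightarrow> 'f set \<Rightarrow> 'f arg set" where
  "Arg ent S = {(G, g). finite G \<and> G \<subseteq> S \<and> ent G g}"

definition attacks :: "('f \<Rightarrow> 'f set) \<Rightarrow> 'f arg \<Rightarrow> 'f arg \<Rightarrow> bool" where
  "attacks con a b \<longleftrightarrow> (\<exists>l \<in> fst b. snd a \<in> con l)"

definition conflict_free :: "'a set \<Rightarrow> ('a \<Rightarrow> 'a \<Rightarrow> bool) \<Rightarrow> 'a set \<Rightarrow> bool" where
  "conflict_free Args Att E \<longleftrightarrow> (\<forall>a\<in>E. \<forall>b\<in>E. \<not> Att a b)"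

definition defends :: "'a set \<Rightarrow> ('a \<Rightarrow> 'a \<Rightarrow> bool) \<Rightarrow> 'a set \<Rightarrow> 'a \<Rightarrow> bool" where
  "defends Args Att E a \<longleftrightarrow> (\<forall>b\<in>Args. Att b a \<longrightarrow> (\<exists>c\<in>E. Att c b))"

definition complete_ext :: "'a set \<Rightarrow> ('a \<Rightarrow> 'a \<Rightarrow> bool) \<Rightarrow> 'a set \<Rightarrow> bool" where
  "complete_ext Args Att E \<longleftrightarrow>
     E \<subseteq> Args \<and> conflict_free Args Att E \<and>
     (\<forall>a\<in>E. defends Args Att E a) \<and>
     (\<forall>a\<in>Args. defends Args Att E a \<longrightarrow> a \<in> E)"

definition grounded_ext :: "'a set \<Rightarrow> ('a \<Rightarrow> 'a \<Rightarrow> bool) \<Rightarrow> 'a set \<Rightarrow> bool" where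
  "grounded_ext Args Att E \<longleftrightarrow>
     complete_ext Args Att E \<and> \<not> (\<exists>E'. complete_ext Args Att E' \<and> E' \<subset> E)"

inductive trcl_ent :: "'f ent \<Rightarrow> 'f ent" for R :: "'f ent" where
  base: "R G g \<Longrightarrow> trcl_ent R G g"
| cut: "trcl_ent R G d \<Longrightarrow> trcl_ent R D g \<Longrightarrow> d \<in> D \<Longrightarrow> trcl_ent R (G \<union> (D - {d})) g"

definition plus_ent :: "'f ent \<Rightarrow> 'f \<Rightarrow> 'f ent" where
  "plus_ent ent phi = trcl_ent (\<lambda>G g. ent G g \<or> (G = {} \<and> g = phi))"

definition satisfies_cut :: "'f ent \<Rightarrow> bool" where
  "satisfies_cut ent \<longleftrightarrow>
     (\<forall>phi G D g. finite G \<longrightarrow> finite D \<longrightarrow> ent G phi \<longrightarrow> plus_ent ent phi D g \<longrightarrow> ent (G \<union> D) g)"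

definition contrapositable :: "'f ent \<Rightarrow> ('f \<Rightarrow> 'f set) \<Rightarrow> bool" where
  "contrapositable ent con \<longleftrightarrow>
     (\<forall>T g g'. finite T \<longrightarrow> ent T g' \<longrightarrow> g' \<in> con g \<longrightarrow>
        (\<forall>s\<in>T. \<exists>s' \<in> con s. ent ((T \<union> {g}) - {s}) s'))"

text \<open>AF_|-(S)-inconsistency (only depends on |- and the contrariness operator).\<close>
definition inconsistent :: "'f ent \<Rightarrow> ('f \<Rightarrow> 'f set) \<Rightarrow> 'f set \<Rightarrow> bool" where
  "inconsistent ent con T \<longleftrightarrow>
     (\<exists>T' \<subseteq> T. \<exists>g \<in> T'. \<exists>g' \<in> con g. ent (T' - {g}) g')"

definition consistent :: "'f ent \<Rightarrow> ('f \<Rightarrow> 'f set) \<Rightarrow> 'f set \<Rightarrow> bool" where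
  "consistent ent con T \<longleftrightarrow> \<not> inconsistent ent con T"

definition MCS :: "'f ent \<Rightarrow> ('f \<Rightarrow> 'f set) \<Rightarrow> 'f set \<Rightarrow> 'f set set" where
  "MCS ent con S = {T. T \<subseteq> S \<and> consistent ent con T \<and>
                       (\<forall>T'. T \<subset> T' \<and> T' \<subseteq> S \<longrightarrow> \<not> consistent ent con T')}"

definition ent_con :: "'f ent \<Rightarrow> ('f \<Rightarrow> 'f set) \<Rightarrow> 'f ent" where
  "ent_con ent con G g \<longleftrightarrow> ent G g \<and> consistent ent con G"

end

theory Submission
  imports Defs
begin

lemma incons_mono:
  "inconsistent ent con A \<Longrightarrow> A \<subseteq> B \<Longrightarrow> inconsistent ent con B"
  unfolding inconsistent_def by blast

lemma incons_finite:
  assumes fin: "\<And>G g. ent G g \<Longrightarrow> finite G"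
    and "inconsistent ent con A"
  shows "\<exists>T. finite T \<and> T \<subseteq> A \<and> inconsistent ent con T"
proof -
  from assms(2) obtain T' g g' where "T' \<subseteq> A" "g \<in> T'" "g' \<in> con g" "ent (T' - {g}) g'"
    unfolding inconsistent_def by blast
  moreover have "finite T'"
  proof -
    have "finite (T' - {g})" using fin \<open>ent (T' - {g}) g'\<close> by blast
    then show ?thesis by simp
  qed
  ultimately show ?thesis unfolding inconsistent_def by blast
qed

lemma attack_incons:
  assumes contra: "contrapositable ent con"
    and "finite H" "ent H h" "h \<in> con l"
  shows "inconsistent ent con (insert l H)"
proof (cases "l \<in> H")
  case False
  then have "insert l H - {l} = H" by blast
  then have "ent (insert l H - {l}) h" using assms(3) by simp
  then show ?thesis unfolding inconsistent_def
    using assms(4) by blast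
next
  case True
  from contra[unfolded contrapositable_def, rule_format, OF assms(2) assms(3) assms(4) True]
  obtain s' where "s' \<in> con l" "ent ((H \<union> {l}) - {l}) s'"
    by blast
  then have "ent (H - {l}) s'" by simp
  then have "inconsistent ent con H" using True \<open>s' \<in> con l\<close>
    unfolding inconsistent_def by blast
  then show ?thesis by (rule incons_mono) blast
qed

lemma extend_mcs:
  assumes fin: "\<And>G g. ent G g \<Longrightarrow> finite G"
    and HS: "H \<subseteq> S" and Hc: "consistent ent con H"
  shows "\<exists>M \<in> MCS ent con S. H \<subseteq> M"
proof -
  define A where "A = {T. H \<subseteq> T \<and> T \<subseteq> S \<and> consistent ent con T}"
  have "H \<in> A" using HS Hc unfolding A_def by simp
  then have "A \<noteq> {}" by auto
  moreover have "\<Union>C \<in> A" if Cne: "C \<noteq> {}" and Cch: "subset.chain A C" for C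
  proof -
    have CA: "C \<subseteq> A" using Cch unfolding subset.chain_def by (rule conjunct1)
    have s1: "H \<subseteq> \<Union>C"
    proof -
      obtain X where "X \<in> C" using Cne by auto
      then have "H \<subseteq> X" using CA unfolding A_def by auto
      then show ?thesis using \<open>X \<in> C\<close> by auto
    qed
    have s2: "\<Union>C \<subseteq> S" using CA unfolding A_def by auto
    have s3: "consistent ent con (\<Union>C)"
    proof (rule ccontr)
      assume "\<not> consistent ent con (\<Union>C)"
      then have "inconsistent ent con (\<Union>C)" unfolding consistent_def by simp
      then obtain T where T: "finite T" "T \<subseteq> \<Union>C" "inconsistent ent con T"
        using incons_finite[of ent con "\<Union>C"] fin by blast
      obtain B where "B \<in> C" "T \<subseteq> B"
        using finite_subset_Union_chain[OF T(1) T(2) Cne Cch] by metis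
      then have "inconsistent ent con B" using T(3) incons_mono by metis
      moreover have "consistent ent con B" using CA \<open>B \<in> C\<close> unfolding A_def by auto
      ultimately show False unfolding consistent_def by simp
    qed
    show ?thesis using s1 s2 s3 unfolding A_def by simp
  qed
  ultimately obtain M where M: "M \<in> A" "\<And>X. X \<in> A \<Longrightarrow> M \<subseteq> X \<Longrightarrow> X = M"
    using subset_Zorn_nonempty[of A] by metis
  have MS: "M \<subseteq> S" and Mc: "consistent ent con M" and HM: "H \<subseteq> M"
    using M(1) unfolding A_def by auto
  have "M \<in> MCS ent con S"
    unfolding MCS_def
  proof (intro CollectI conjI allI impI)
    show "M \<subseteq> S" "consistent ent con M" using MS Mc by auto
    fix T' assume T': "M \<subset> T' \<and> T' \<subseteq> S"
    show "\<not> consistent ent con T'"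
    proof
      assume "consistent ent con T'"
      then have "T' \<in> A" using T' HM unfolding A_def by auto
      then have "T' = M" using M(2) T' by auto
      then show False using T' by auto
    qed
  qed
  then show ?thesis using HM by auto
qed

theorem lemma12:
  fixes ent :: "'f set \<Rightarrow> 'f \<Rightarrow> bool" and con :: "'f \<Rightarrow> 'f set" and S :: "'f set"
  assumes fin: "\<And>G g. ent G g \<Longrightarrow> finite G"
    and contra: "contrapositable ent con"
    and cut: "satisfies_cut ent"
  shows "grounded_ext (Arg (ent_con ent con) S) (attacks con)
           (Arg ent (\<Inter> (MCS ent con S)))"
proof -
  let ?Args = "Arg (ent_con ent con) S"
  let ?F = "\<Inter> (MCS ent con S)"
  let ?E = "Arg ent ?F"
  have cons_empty: "consistent ent con {}" unfolding consistent_def inconsistent_def by blast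
  obtain M0 where M0: "M0 \<in> MCS ent con S" using extend_mcs[where ent=ent and con=con and S=S and H="{}"] fin cons_empty by blast
  have mcsD: "M \<subseteq> S \<and> consistent ent con M" if "M \<in> MCS ent con S" for M
    using that unfolding MCS_def by blast
  have cons_sub: "consistent ent con A" if "A \<subseteq> B" "consistent ent con B" for A B
    using that incons_mono unfolding consistent_def by blast
  have EA: "?E \<subseteq> ?Args"
  proof
    fix a assume "a \<in> ?E"
    then obtain G g where a: "a = (G, g)" "finite G" "G \<subseteq> ?F" "ent G g"
      unfolding Arg_def by auto
    then have "G \<subseteq> M0" using M0 by blast
    then have "G \<subseteq> S" "consistent ent con G" using mcsD[OF M0] cons_sub by blast+
    then show "a \<in> ?Args" using a unfolding Arg_def ent_con_def by auto
  qed
  have unatt: "\<not> attacks con b a" if aE: "a \<in> ?E" and bA: "b \<in> ?Args" for a b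
  proof
    assume att: "attacks con b a"
    obtain G g where a: "a = (G, g)" "G \<subseteq> ?F" using aE unfolding Arg_def by auto
    obtain H h where b: "b = (H, h)" "finite H" "H \<subseteq> S" "ent H h" "consistent ent con H"
      using bA unfolding Arg_def ent_con_def by auto
    from att a b obtain l where "l \<in> G" "h \<in> con l" unfolding attacks_def by auto
    then have inc: "inconsistent ent con (insert l H)"
      using attack_incons[OF contra b(2) b(4)] by blast
    obtain M where M: "M \<in> MCS ent con S" "H \<subseteq> M" using extend_mcs[where ent=ent and con=con and S=S and H=H] fin b(3) b(5) by blast
    have "l \<in> M" using \<open>l \<in> G\<close> a M(1) by blast
    then have "insert l H \<subseteq> M" using M by blast
    then show False using inc mcsD[OF M(1)] incons_mono unfolding consistent_def by blast
  qed
  have defE: "defends ?Args (attacks con) E a" if "a \<in> ?E" for E a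
    using unatt[OF that] unfolding defends_def by blast
  have cfE: "conflict_free ?Args (attacks con) ?E"
    using unatt EA unfolding conflict_free_def by blast
  have closed: "a \<in> ?E" if aA: "a \<in> ?Args" and adef: "defends ?Args (attacks con) ?E a" for a
  proof -
    obtain G g where a: "a = (G, g)" "finite G" "G \<subseteq> S" "ent G g"
      using aA unfolding Arg_def ent_con_def by auto
    have "G \<subseteq> M" if M: "M \<in> MCS ent con S" for M
    proof
      fix l assume "l \<in> G"
      show "l \<in> M"
      proof (rule ccontr)
        assume "l \<notin> M"
        have "M \<subset> insert l M" "insert l M \<subseteq> S" using \<open>l \<notin> M\<close> \<open>l \<in> G\<close> a mcsD[OF M] by auto
        then have "inconsistent ent con (insert l M)"
          using M unfolding MCS_def consistent_def by blast
        then obtain T' g0 g0' where T': "T' \<subseteq> insert l M" "g0 \<in> T'" "g0' \<in> con g0"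
          "ent (T' - {g0}) g0'" unfolding inconsistent_def by blast
        have "l \<in> T'"
        proof (rule ccontr)
          assume "l \<notin> T'"
          then have "T' \<subseteq> M" using T' by blast
          then have "inconsistent ent con M" using T' unfolding inconsistent_def by blast
          then show False using mcsD[OF M] unfolding consistent_def by blast
        qed
        have finT: "finite T'" using fin[OF T'(4)] by simp
        obtain l' where l': "l' \<in> con l" "ent (T' - {l}) l'"
        proof (cases "g0 = l")
          case True then show ?thesis using that T' by blast
        next
          case False
          have "finite (T' - {g0})" using finT by simp
          from contra[unfolded contrapositable_def, rule_format, OF this T'(4) T'(3)]
          obtain s' where "s' \<in> con l" "ent ((T' - {g0} \<union> {g0}) - {l}) s'"
            using False \<open>l \<in> T'\<close> by blast
          moreover have "(T' - {g0} \<union> {g0}) - {l} = T' - {l}" using T'(2) by blast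
          ultimately show ?thesis using that by auto
        qed
        let ?K = "T' - {l}"
        have KM: "?K \<subseteq> M" using T'(1) by blast
        have "?K \<subseteq> S" "consistent ent con ?K" using KM mcsD[OF M] cons_sub by blast+
        then have bA: "(?K, l') \<in> ?Args" using finT l' unfolding Arg_def ent_con_def by auto
        have "attacks con (?K, l') a" using a l' \<open>l \<in> G\<close> unfolding attacks_def by auto
        then obtain c where c: "c \<in> ?E" "attacks con c (?K, l')"
          using adef bA unfolding defends_def by blast
        obtain C c0 where cc: "c = (C, c0)" "finite C" "C \<subseteq> ?F" "ent C c0"
          using c(1) unfolding Arg_def by auto
        from c(2) cc obtain k where "k \<in> ?K" "c0 \<in> con k" unfolding attacks_def by auto
        then have "inconsistent ent con (insert k C)"
          using attack_incons[OF contra cc(2) cc(4)] by blast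
        moreover have "insert k C \<subseteq> M" using \<open>k \<in> ?K\<close> KM cc(3) M by blast
        ultimately show False using mcsD[OF M] incons_mono unfolding consistent_def by blast
      qed
    qed
    then have "G \<subseteq> ?F" by blast
    then show ?thesis using a unfolding Arg_def by auto
  qed
  have compE: "complete_ext ?Args (attacks con) ?E"
    unfolding complete_ext_def using EA cfE defE closed by blast
  have "?E \<subseteq> E'" if "complete_ext ?Args (attacks con) E'" for E'
    using that defE EA unfolding complete_ext_def by blast
  then show ?thesis unfolding grounded_ext_def using compE by blast
qed

end
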